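(* Let $R$ be a commutative ring and let $(A,L',L'')$ be an almost twilled Lie-Rinehart algebra over $R$ such that $L'$ and $L''$ are finitely generated and projective as $A$-modules. Then $(A,L',L'')$ is a twilled Lie-Rinehart algebra if and only if $(A,L,D)=(A,L'\ltimes{L''}^*,L''\ltimes{L'}^* )$ is a Lie-Rinehart bialgebra.
   Context: A Lie-Rinehart algebra $(A,L)$ over a commutative ring $R$ consists of a commutative $R$-algebra $A$, an $R$-Lie algebra $L$ which is an $A$-module, and a Lie algebra action $L\to\mathrm{Der}(A)$, $\alpha\mapsto(a\mapsto\alpha(a))$, such that $(a\alpha)(b)=a\,\alpha(b)$ and $[\alpha,a\beta]=\alpha(a)\beta+a[\alpha,\beta]$ for $a,b\in A$, $\alpha,\beta\in L$; $L$ is then called an $(R,A)$-Lie algebra. An $(A,L)$-module is an $A$-module $M$ with an $R$-Lie algebra action of $L$ satisfying $(a\alpha)(m)=a(\alpha(m))$ and $\alpha(am)=\alpha(a)m+a\alpha(m)$. An almost twilled Lie-Rinehart algebra $(A,L',L'')$ consists of two Lie-Rinehart algebras $(A,L')$, $(A,L'')$ (same $A$) together with $R$-linear pairings $L'\otimes_RL''\to L''$ and $L''\otimes_RL'\to L'$ (both written $\cdot$) making $L''$ an $(A,L')$-module and $L'$ an $(A,L'')$-module. It is a twilled Lie-Rinehart algebra if the direct sum $A$-module $L'\oplus L''$, with action on $A$ the sum of the actions of $L'$ and $L''$ and with bracket $[(\alpha'',\alpha'),(\beta'',\beta')]=[\alpha'',\beta'']+[\alpha',\beta']+\alpha''\cdot\beta'-\beta'\cdot\alpha''+\alpha'\cdot\beta''-\beta''\cdot\alpha'$,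 is a Lie-Rinehart algebra over $A$. The $(A,L')$-module structure on $L''$ induces one on ${L''}^*=\mathrm{Hom}_A(L'',A)$; regarding ${L''}^*$ as an abelian $(R,A)$-Lie algebra, $L=L'\ltimes{L''}^*$ is the semidirect product $(R,A)$-Lie algebra: $A$-module $L'\oplus{L''}^*$, bracket $[(x,\phi),(y,\psi)]=([x,y],x\cdot\psi-y\cdot\phi)$, action on $A$ through $L'$. Likewise $D=L''\ltimes{L'}^*$ using the $(A,L'')$-module structure on $L'$. As $A$-modules $D\cong\mathrm{Hom}_A(L,A)$. For an $(R,A)$-Lie algebra $L$, $\Lambda_AL$ carries the Gerstenhaber bracket $[\cdot,\cdot]$ extending the bracket of $L$ and $[\alpha,a]=\alpha(a)$; on $u=\alpha_1\wedge\dots\wedge\alpha_\ell$, $v=\alpha_{\ell+1}\wedge\dots\wedge\alpha_n$ it is $[u,v]=(-1)^{\ell}\sum_{j\le\ell<k}(-1)^{j+k}[\alpha_j,\alpha_k]\wedge\alpha_1\wedge\dots\widehat{\alpha_j}\dots\widehat{\alpha_k}\dots\wedge\alpha_n$. The Lie-Rinehart structure on $D$ gives the Lie-Rinehart (Chevalley–Eilenberg) differential $d_*$ on $\mathrm{Alt}_A(D,A)\cong\Lambda_AL$. $(A,L,D)$ is a Lie-Rinehart bialgebra if $d_*[x,y]=[d_*x,y]+[x,d_*y]$ for all $x,y\in L$ (equivalently, the Lie-Rinehart differential $d$ of $L$ on $\mathrm{Alt}_A(L,A)\cong\Lambda_AD$ is a derivation of the Gerstenhaber bracket $[\cdot,\cdot]_*$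 of $D$: $d[x,y]_*=[dx,y]_*-(-1)^{|x|}[x,dy]_*$ for all $x,y\in\Lambda_AD$). *)

theory Defs
  imports Main "HOL-Library.Function_Algebras" "HOL-Library.Product_Plus"
begin

(* R is a type 'r :: comm_ring_1; the commutative R-algebra A is a type 'a :: comm_ring_1
   together with its structure map iota : R -> A (a unital ring homomorphism).
   R acts on A-modules through iota. *)

definition R_algebra_map :: "('r::comm_ring_1 \<Rightarrow> 'a::comm_ring_1) \<Rightarrow> bool" where
  "R_algebra_map \<iota> \<longleftrightarrow> \<iota> 1 = 1 \<and> (\<forall>r s. \<iota> (r + s) = \<iota> r + \<iota> s) \<and> (\<forall>r s. \<iota> (r * s) = \<iota> r * \<iota> s)"

definition A_module :: "'l::ab_group_add set \<Rightarrow> ('a::comm_ring_1 \<Rightarrow> 'l \<Rightarrow> 'l) \<Rightarrow> bool" where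
  "A_module C sm \<longleftrightarrow>
     0 \<in> C \<and> (\<forall>x\<in>C. \<forall>y\<in>C. x + y \<in> C) \<and> (\<forall>x\<in>C. - x \<in> C) \<and> (\<forall>a. \<forall>x\<in>C. sm a x \<in> C)
   \<and> (\<forall>a. \<forall>x\<in>C. \<forall>y\<in>C. sm a (x + y) = sm a x + sm a y)
   \<and> (\<forall>a b. \<forall>x\<in>C. sm (a + b) x = sm a x + sm b x)
   \<and> (\<forall>a b. \<forall>x\<in>C. sm (a * b) x = sm a (sm b x))
   \<and> (\<forall>x\<in>C. sm 1 x = x)"

definition R_derivation :: "('r::comm_ring_1 \<Rightarrow> 'a::comm_ring_1) \<Rightarrow> ('a \<Rightarrow> 'a) \<Rightarrow> bool" where
  "R_derivation \<iota> \<delta> \<longleftrightarrow> (\<forall>a b. \<delta> (a + b) = \<delta> a + \<delta> b) \<and> (\<forall>r a. \<delta> (\<iota> r * a) = \<iota> r * \<delta> a)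
     \<and> (\<forall>a b. \<delta> (a * b) = a * \<delta> b + b * \<delta> a)"

definition is_LR :: "('r::comm_ring_1 \<Rightarrow> 'a::comm_ring_1) \<Rightarrow> 'l::ab_group_add set
    \<Rightarrow> ('a \<Rightarrow> 'l \<Rightarrow> 'l) \<Rightarrow> ('l \<Rightarrow> 'l \<Rightarrow> 'l) \<Rightarrow> ('l \<Rightarrow> 'a \<Rightarrow> 'a) \<Rightarrow> bool" where
  "is_LR \<iota> C sm br anc \<longleftrightarrow>
     A_module C sm
   \<and> (\<forall>x\<in>C. \<forall>y\<in>C. br x y \<in> C)
   \<and> (\<forall>x\<in>C. \<forall>y\<in>C. \<forall>z\<in>C. br (x + y) z = br x z + br y z \<and> br x (y + z) = br x y + br x z)
   \<and> (\<forall>r. \<forall>x\<in>C. \<forall>y\<in>C. br (sm (\<iota> r) x) y = sm (\<iota> r) (br x y) \<and> br x (sm (\<iota> r) y) = sm (\<iota> r) (br x y))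
   \<and> (\<forall>x\<in>C. br x x = 0)
   \<and> (\<forall>x\<in>C. \<forall>y\<in>C. \<forall>z\<in>C. br x (br y z) + br y (br z x) + br z (br x y) = 0)
   \<and> (\<forall>x\<in>C. R_derivation \<iota> (anc x))
   \<and> (\<forall>x\<in>C. \<forall>y\<in>C. \<forall>a. anc (x + y) a = anc x a + anc y a)
   \<and> (\<forall>r. \<forall>x\<in>C. \<forall>a. anc (sm (\<iota> r) x) a = \<iota> r * anc x a)
   \<and> (\<forall>x\<in>C. \<forall>y\<in>C. \<forall>a. anc (br x y) a = anc x (anc y a) - anc y (anc x a))
   \<and> (\<forall>a b. \<forall>x\<in>C. anc (sm a x) b = a * anc x b)
   \<and> (\<forall>a. \<forall>x\<in>C. \<forall>y\<in>C. br x (sm a y) = sm (anc x a) y + sm a (br x y))"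

definition is_LR_module :: "('r::comm_ring_1 \<Rightarrow> 'a::comm_ring_1) \<Rightarrow> 'l::ab_group_add set
    \<Rightarrow> ('a \<Rightarrow> 'l \<Rightarrow> 'l) \<Rightarrow> ('l \<Rightarrow> 'l \<Rightarrow> 'l) \<Rightarrow> ('l \<Rightarrow> 'a \<Rightarrow> 'a)
    \<Rightarrow> 'm::ab_group_add set \<Rightarrow> ('a \<Rightarrow> 'm \<Rightarrow> 'm) \<Rightarrow> ('l \<Rightarrow> 'm \<Rightarrow> 'm) \<Rightarrow> bool" where
  "is_LR_module \<iota> C sm br anc CM smM act \<longleftrightarrow>
     A_module CM smM
   \<and> (\<forall>x\<in>C. \<forall>m\<in>CM. act x m \<in> CM)
   \<and> (\<forall>x\<in>C. \<forall>y\<in>C. \<forall>m\<in>CM. act (x + y) m = act x m + act y m)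
   \<and> (\<forall>x\<in>C. \<forall>m\<in>CM. \<forall>n\<in>CM. act x (m + n) = act x m + act x n)
   \<and> (\<forall>r. \<forall>x\<in>C. \<forall>m\<in>CM. act (sm (\<iota> r) x) m = smM (\<iota> r) (act x m) \<and> act x (smM (\<iota> r) m) = smM (\<iota> r) (act x m))
   \<and> (\<forall>x\<in>C. \<forall>y\<in>C. \<forall>m\<in>CM. act (br x y) m = act x (act y m) - act y (act x m))
   \<and> (\<forall>a. \<forall>x\<in>C. \<forall>m\<in>CM. act (sm a x) m = smM a (act x m))
   \<and> (\<forall>a. \<forall>x\<in>C. \<forall>m\<in>CM. act x (smM a m) = smM (anc x a) m + smM a (act x m))"

(* Almost twilled Lie-Rinehart algebra (A,L',L''): L' is the type 'p with (sm1, br1, anc1),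
   L'' is the type 'q with (sm2, br2, anc2); dot12 : L' (x) L'' -> L'' and dot21 : L'' (x) L' -> L'. *)
definition almost_twilled :: "('r::comm_ring_1 \<Rightarrow> 'a::comm_ring_1)
    \<Rightarrow> ('a \<Rightarrow> 'p::ab_group_add \<Rightarrow> 'p) \<Rightarrow> ('p \<Rightarrow> 'p \<Rightarrow> 'p) \<Rightarrow> ('p \<Rightarrow> 'a \<Rightarrow> 'a)
    \<Rightarrow> ('a \<Rightarrow> 'q::ab_group_add \<Rightarrow> 'q) \<Rightarrow> ('q \<Rightarrow> 'q \<Rightarrow> 'q) \<Rightarrow> ('q \<Rightarrow> 'a \<Rightarrow> 'a)
    \<Rightarrow> ('p \<Rightarrow> 'q \<Rightarrow> 'q) \<Rightarrow> ('q \<Rightarrow> 'p \<Rightarrow> 'p) \<Rightarrow> bool" where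
  "almost_twilled \<iota> sm1 br1 anc1 sm2 br2 anc2 dot12 dot21 \<longleftrightarrow>
     is_LR \<iota> UNIV sm1 br1 anc1 \<and> is_LR \<iota> UNIV sm2 br2 anc2
   \<and> is_LR_module \<iota> UNIV sm1 br1 anc1 UNIV sm2 dot12
   \<and> is_LR_module \<iota> UNIV sm2 br2 anc2 UNIV sm1 dot21"

definition sum_sm :: "('a \<Rightarrow> 'p \<Rightarrow> 'p) \<Rightarrow> ('a \<Rightarrow> 'q \<Rightarrow> 'q) \<Rightarrow> 'a \<Rightarrow> 'p \<times> 'q \<Rightarrow> 'p \<times> 'q" where
  "sum_sm sm1 sm2 a u = (sm1 a (fst u), sm2 a (snd u))"

definition sum_anc :: "('p \<Rightarrow> 'a::comm_ring_1) \<Rightarrow> ('q \<Rightarrow> 'a) \<Rightarrow> 'p \<times> 'q \<Rightarrow> 'a" where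
  "sum_anc anc1 anc2 u = anc1 (fst u) + anc2 (snd u)"

definition sum_br :: "('p::ab_group_add \<Rightarrow> 'p \<Rightarrow> 'p) \<Rightarrow> ('q::ab_group_add \<Rightarrow> 'q \<Rightarrow> 'q)
    \<Rightarrow> ('p \<Rightarrow> 'q \<Rightarrow> 'q) \<Rightarrow> ('q \<Rightarrow> 'p \<Rightarrow> 'p) \<Rightarrow> 'p \<times> 'q \<Rightarrow> 'p \<times> 'q \<Rightarrow> 'p \<times> 'q" where
  "sum_br br1 br2 dot12 dot21 u v =
     (br1 (fst u) (fst v) + dot21 (snd u) (fst v) - dot21 (snd v) (fst u),
      br2 (snd u) (snd v) + dot12 (fst u) (snd v) - dot12 (fst v) (snd u))"

definition twilled :: "('r::comm_ring_1 \<Rightarrow> 'a::comm_ring_1)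
    \<Rightarrow> ('a \<Rightarrow> 'p::ab_group_add \<Rightarrow> 'p) \<Rightarrow> ('p \<Rightarrow> 'p \<Rightarrow> 'p) \<Rightarrow> ('p \<Rightarrow> 'a \<Rightarrow> 'a)
    \<Rightarrow> ('a \<Rightarrow> 'q::ab_group_add \<Rightarrow> 'q) \<Rightarrow> ('q \<Rightarrow> 'q \<Rightarrow> 'q) \<Rightarrow> ('q \<Rightarrow> 'a \<Rightarrow> 'a)
    \<Rightarrow> ('p \<Rightarrow> 'q \<Rightarrow> 'q) \<Rightarrow> ('q \<Rightarrow> 'p \<Rightarrow> 'p) \<Rightarrow> bool" where
  "twilled \<iota> sm1 br1 anc1 sm2 br2 anc2 dot12 dot21 \<longleftrightarrow>
     almost_twilled \<iota> sm1 br1 anc1 sm2 br2 anc2 dot12 dot21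
   \<and> is_LR \<iota> UNIV (sum_sm sm1 sm2) (sum_br br1 br2 dot12 dot21) (sum_anc anc1 anc2)"

definition dual_mod :: "('a::comm_ring_1 \<Rightarrow> 'm::ab_group_add \<Rightarrow> 'm) \<Rightarrow> ('m \<Rightarrow> 'a) set" where
  "dual_mod sm = {\<phi>. (\<forall>x y. \<phi> (x + y) = \<phi> x + \<phi> y) \<and> (\<forall>a x. \<phi> (sm a x) = a * \<phi> x)}"

(* Finitely generated projective A-module (dual basis characterisation) *)
definition fg_projective :: "('a::comm_ring_1 \<Rightarrow> 'm::ab_group_add \<Rightarrow> 'm) \<Rightarrow> bool" where
  "fg_projective sm \<longleftrightarrow> (\<exists>(n::nat) (e::nat \<Rightarrow> 'm) (f::nat \<Rightarrow> 'm \<Rightarrow> 'a).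
      (\<forall>i<n. f i \<in> dual_mod sm) \<and> (\<forall>x. x = (\<Sum>i<n. sm (f i x) (e i))))"

definition dual_act :: "('l \<Rightarrow> 'a::comm_ring_1 \<Rightarrow> 'a) \<Rightarrow> ('l \<Rightarrow> 'm \<Rightarrow> 'm) \<Rightarrow> 'l \<Rightarrow> ('m \<Rightarrow> 'a) \<Rightarrow> 'm \<Rightarrow> 'a" where
  "dual_act anc dot x \<phi> = (\<lambda>m. anc x (\<phi> m) - \<phi> (dot x m))"

(* semidirect product L1 |x M^* with M^* abelian *)
definition sdp_sm :: "('a::comm_ring_1 \<Rightarrow> 'l \<Rightarrow> 'l) \<Rightarrow> 'a \<Rightarrow> 'l \<times> ('m \<Rightarrow> 'a) \<Rightarrow> 'l \<times> ('m \<Rightarrow> 'a)" where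
  "sdp_sm sm a u = (sm a (fst u), \<lambda>m. a * snd u m)"

definition sdp_br :: "('l \<Rightarrow> 'l \<Rightarrow> 'l) \<Rightarrow> ('l \<Rightarrow> 'a::comm_ring_1 \<Rightarrow> 'a) \<Rightarrow> ('l \<Rightarrow> 'm \<Rightarrow> 'm)
    \<Rightarrow> 'l \<times> ('m \<Rightarrow> 'a) \<Rightarrow> 'l \<times> ('m \<Rightarrow> 'a) \<Rightarrow> 'l \<times> ('m \<Rightarrow> 'a)" where
  "sdp_br br anc dot u v =
     (br (fst u) (fst v), \<lambda>m. dual_act anc dot (fst u) (snd v) m - dual_act anc dot (fst v) (snd u) m)"

definition sdp_anc :: "('l \<Rightarrow> 'a \<Rightarrow> 'a) \<Rightarrow> 'l \<times> ('m \<Rightarrow> 'a) \<Rightarrow> 'a \<Rightarrow> 'a" where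
  "sdp_anc anc u = anc (fst u)"

(* the duality pairing L x D -> A, L = L' |x L''^*, D = L'' |x L'^*, realising D = Hom_A(L,A) *)
definition pairing_LD :: "'p \<times> ('q \<Rightarrow> 'a::comm_ring_1) \<Rightarrow> 'q \<times> ('p \<Rightarrow> 'a) \<Rightarrow> 'a" where
  "pairing_LD u d = snd u (fst d) + snd d (fst u)"

(* Lambda_A L is realised, via the identification Lambda_A L = Alt_A(D,A) (valid since L is
   f.g. projective), as alternating forms on D; pr is the pairing L x D -> A. *)

definition wedge2 :: "('l \<Rightarrow> 'd \<Rightarrow> 'a::comm_ring_1) \<Rightarrow> 'l \<Rightarrow> 'l \<Rightarrow> 'd \<Rightarrow> 'd \<Rightarrow> 'a" where
  "wedge2 pr \<alpha> \<beta> = (\<lambda>d1 d2. pr \<alpha> d1 * pr \<beta> d2 - pr \<alpha> d2 * pr \<beta> d1)"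

(* Lie-Rinehart (Chevalley-Eilenberg) differential d_* of D applied to the 1-form pr x *)
definition dstar1 :: "('d \<Rightarrow> 'd \<Rightarrow> 'd) \<Rightarrow> ('d \<Rightarrow> 'a::comm_ring_1 \<Rightarrow> 'a) \<Rightarrow> ('l \<Rightarrow> 'd \<Rightarrow> 'a)
    \<Rightarrow> 'l \<Rightarrow> 'd \<Rightarrow> 'd \<Rightarrow> 'a" where
  "dstar1 brD ancD pr x = (\<lambda>d1 d2. ancD d1 (pr x d2) - ancD d2 (pr x d1) - pr x (brD d1 d2))"

(* Gerstenhaber bracket [u, y] for u in Lambda^2 L, y in L: by the defining formula,
   [a1/\a2, y] = [a1,y]/\a2 - [a2,y]/\a1 = [a1,y]/\a2 + a1/\[a2,y], extended additively
   (u written as a finite sum of decomposables). *)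
definition gb_2_1 :: "'l set \<Rightarrow> 'd set \<Rightarrow> ('l \<Rightarrow> 'l \<Rightarrow> 'l) \<Rightarrow> ('l \<Rightarrow> 'd \<Rightarrow> 'a::comm_ring_1)
    \<Rightarrow> ('d \<Rightarrow> 'd \<Rightarrow> 'a) \<Rightarrow> 'l \<Rightarrow> ('d \<Rightarrow> 'd \<Rightarrow> 'a) \<Rightarrow> bool" where
  "gb_2_1 CL CD brL pr u y w \<longleftrightarrow> (\<exists>(n::nat) \<alpha> \<beta>. (\<forall>i<n. \<alpha> i \<in> CL \<and> \<beta> i \<in> CL) \<and>
     (\<forall>d1\<in>CD. \<forall>d2\<in>CD. u d1 d2 = (\<Sum>i<n. wedge2 pr (\<alpha> i) (\<beta> i) d1 d2)
        \<and> w d1 d2 = (\<Sum>i<n. wedge2 pr (brL (\<alpha> i) y) (\<beta> i) d1 d2 + wedge2 pr (\<alpha> i) (brL (\<beta> i) y) d1 d2)))"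

(* Gerstenhaber bracket [x, v] for x in L, v in Lambda^2 L:
   [x, a2/\a3] = [x,a2]/\a3 - [x,a3]/\a2 = [x,a2]/\a3 + a2/\[x,a3]. Relation "w = [x,v]". *)
definition gb_1_2 :: "'l set \<Rightarrow> 'd set \<Rightarrow> ('l \<Rightarrow> 'l \<Rightarrow> 'l) \<Rightarrow> ('l \<Rightarrow> 'd \<Rightarrow> 'a::comm_ring_1)
    \<Rightarrow> 'l \<Rightarrow> ('d \<Rightarrow> 'd \<Rightarrow> 'a) \<Rightarrow> ('d \<Rightarrow> 'd \<Rightarrow> 'a) \<Rightarrow> bool" where
  "gb_1_2 CL CD brL pr x v w \<longleftrightarrow> (\<exists>(n::nat) \<alpha> \<beta>. (\<forall>i<n. \<alpha> i \<in> CL \<and> \<beta> i \<in> CL) \<and>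
     (\<forall>d1\<in>CD. \<forall>d2\<in>CD. v d1 d2 = (\<Sum>i<n. wedge2 pr (\<alpha> i) (\<beta> i) d1 d2)
        \<and> w d1 d2 = (\<Sum>i<n. wedge2 pr (brL x (\<alpha> i)) (\<beta> i) d1 d2 + wedge2 pr (\<alpha> i) (brL x (\<beta> i)) d1 d2)))"

definition LR_bialgebra :: "('r::comm_ring_1 \<Rightarrow> 'a::comm_ring_1)
    \<Rightarrow> 'l::ab_group_add set \<Rightarrow> ('a \<Rightarrow> 'l \<Rightarrow> 'l) \<Rightarrow> ('l \<Rightarrow> 'l \<Rightarrow> 'l) \<Rightarrow> ('l \<Rightarrow> 'a \<Rightarrow> 'a)
    \<Rightarrow> 'd::ab_group_add set \<Rightarrow> ('a \<Rightarrow> 'd \<Rightarrow> 'd) \<Rightarrow> ('d \<Rightarrow> 'd \<Rightarrow> 'd) \<Rightarrow> ('d \<Rightarrow> 'a \<Rightarrow> 'a)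
    \<Rightarrow> ('l \<Rightarrow> 'd \<Rightarrow> 'a) \<Rightarrow> bool" where
  "LR_bialgebra \<iota> CL smL brL ancL CD smD brD ancD pr \<longleftrightarrow>
     is_LR \<iota> CL smL brL ancL \<and> is_LR \<iota> CD smD brD ancD
   \<and> (\<forall>x\<in>CL. \<forall>y\<in>CL. \<exists>w1 w2.
        gb_2_1 CL CD brL pr (dstar1 brD ancD pr x) y w1
      \<and> gb_1_2 CL CD brL pr x (dstar1 brD ancD pr y) w2
      \<and> (\<forall>d1\<in>CD. \<forall>d2\<in>CD. dstar1 brD ancD pr (brL x y) d1 d2 = w1 d1 d2 + w2 d1 d2))"

end

theory Submission
  imports Defs
begin

lemma addhom:
  fixes f :: "'x::ab_group_add \<Rightarrow> 'y::ab_group_add"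
  assumes "\<And>x y. f (x + y) = f x + f y"
  shows "f 0 = 0" "f (- x) = - f x" "f (x - y) = f x - f y"
proof -
  show 0: "f 0 = 0" using assms[of 0 0] by simp
  have "f x + f (- x) = 0" using assms[of x "-x"] 0 by simp
  then show n: "f (- x) = - f x" using minus_unique[of "f x" "f (-x)"] by simp
  have "f (- y) = - f y" using assms[of y "-y"] 0 minus_unique[of "f y" "f (-y)"] by simp
  then show "f (x - y) = f x - f y" using assms[of x "-y"] by simp
qed

lemma amod:
  assumes "A_module UNIV sm"
  shows "sm a (x + y) = sm a x + sm a y" "sm (a + b) x = sm a x + sm b x"
    "sm (a * b) x = sm a (sm b x)" "sm 1 x = x"
  using assms unfolding A_module_def by auto

lemma amod2:
  assumes "A_module UNIV sm"
  shows "sm a 0 = 0" "sm 0 x = 0" "sm a (- x) = - sm a x" "sm a (x - y) = sm a x - sm a y"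
   "sm (- a) x = - sm a x" "sm (a - b) x = sm a x - sm b x"
  using addhom[of "sm a", OF amod(1)[OF assms]] addhom[of "\<lambda>a. sm a x", OF amod(2)[OF assms]]
  by auto

lemma deriv:
  assumes "R_derivation \<iota> d"
  shows "d (a + b) = d a + d b" "d (a * b) = a * d b + b * d a"
    "d 0 = 0" "d (- a) = - d a" "d (a - b) = d a - d b" "d 1 = 0"
    "d (\<iota> r * a) = \<iota> r * d a"
proof -
  have h1: "d (a + b) = d a + d b" for a b using assms unfolding R_derivation_def by auto
  have h2: "d (a * b) = a * d b + b * d a" for a b using assms unfolding R_derivation_def by auto
  show "d (a + b) = d a + d b" "d (a * b) = a * d b + b * d a" by (rule h1, rule h2)
  show "d 0 = 0" "d (- a) = - d a" "d (a - b) = d a - d b" using addhom[of d, OF h1] by auto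
  show "d 1 = 0" using h2[of 1 1] by simp
  show "d (\<iota> r * a) = \<iota> r * d a" using assms unfolding R_derivation_def by auto
qed

lemma LRf:
  assumes "is_LR \<iota> UNIV sm br anc"
  shows "A_module UNIV sm"
   "br (x + y) z = br x z + br y z" "br x (y + z) = br x y + br x z"
   "br (sm (\<iota> r) x) y = sm (\<iota> r) (br x y)" "br x (sm (\<iota> r) y) = sm (\<iota> r) (br x y)"
   "br x x = 0"
   "br x (br y z) + br y (br z x) + br z (br x y) = 0"
   "R_derivation \<iota> (anc x)"
   "anc (x + y) a = anc x a + anc y a"
   "anc (br x y) a = anc x (anc y a) - anc y (anc x a)"
   "anc (sm a x) b = a * anc x b"
   "br x (sm a y) = sm (anc x a) y + sm a (br x y)"
  using assms unfolding is_LR_def by auto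

lemma LRg:
  assumes "is_LR \<iota> UNIV sm br anc"
  shows "br 0 x = 0" "br x 0 = 0" "br (- x) y = - br x y" "br x (- y) = - br x y"
    "br (x - y) z = br x z - br y z" "br x (y - z) = br x y - br x z"
    "br x y = - br y x"
    "anc 0 a = 0" "anc (- x) a = - anc x a" "anc (x - y) a = anc x a - anc y a"
proof -
  note h = LRf[OF assms]
  show "br 0 x = 0" "br (- x) y = - br x y" "br (x - y) z = br x z - br y z"
    using addhom[of "\<lambda>x. br x z" for z, OF h(2)] by auto
  show "br x 0 = 0" "br x (- y) = - br x y" "br x (y - z) = br x y - br x z"
    using addhom[of "\<lambda>y. br x y" for x, OF h(3)] by auto
  show "anc 0 a = 0" "anc (- x) a = - anc x a" "anc (x - y) a = anc x a - anc y a"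
    using addhom[of "\<lambda>x. anc x a" for a, OF h(9)] by auto
  have "br (x + y) (x + y) = 0" by (rule h(6))
  then have "br x y + br y x = 0" using h(2,3) h(6)[of x] h(6)[of y] by (simp add: add.commute)
  then show "br x y = - br y x" using minus_unique[of "br y x" "br x y"] by (simp add: add.commute)
qed

lemma LRMf:
  assumes "is_LR_module \<iota> UNIV sm br anc UNIV smM act"
  shows "A_module UNIV smM"
   "act (x + y) m = act x m + act y m" "act x (m + n) = act x m + act x n"
   "act (sm (\<iota> r) x) m = smM (\<iota> r) (act x m)" "act x (smM (\<iota> r) m) = smM (\<iota> r) (act x m)"
   "act (br x y) m = act x (act y m) - act y (act x m)"
   "act (sm a x) m = smM a (act x m)"
   "act x (smM a m) = smM (anc x a) m + smM a (act x m)"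
  using assms unfolding is_LR_module_def by auto

lemma LRMg:
  assumes "is_LR_module \<iota> UNIV sm br anc UNIV smM act"
  shows "act 0 m = 0" "act x 0 = 0" "act (- x) m = - act x m" "act x (- m) = - act x m"
    "act (x - y) m = act x m - act y m" "act x (m - n) = act x m - act x n"
proof -
  note h = LRMf[OF assms]
  show "act 0 m = 0" "act (- x) m = - act x m" "act (x - y) m = act x m - act y m"
    using addhom[of "\<lambda>x. act x m" for m, OF h(2)] by auto
  show "act x 0 = 0" "act x (- m) = - act x m" "act x (m - n) = act x m - act x n"
    using addhom[of "\<lambda>m. act x m" for x, OF h(3)] by auto
qed

lemma dualf:
  assumes "\<phi> \<in> dual_mod sm"
  shows "\<phi> (x + y) = \<phi> x + \<phi> y" "\<phi> (sm a x) = a * \<phi> x" "\<phi> 0 = 0" "\<phi> (- x) = - \<phi> x"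
    "\<phi> (x - y) = \<phi> x - \<phi> y"
proof -
  have h1: "\<phi> (x + y) = \<phi> x + \<phi> y" for x y using assms unfolding dual_mod_def by auto
  show "\<phi> (x + y) = \<phi> x + \<phi> y" by (rule h1)
  show "\<phi> (sm a x) = a * \<phi> x" using assms unfolding dual_mod_def by auto
  show "\<phi> 0 = 0" "\<phi> (- x) = - \<phi> x" "\<phi> (x - y) = \<phi> x - \<phi> y" using addhom[of \<phi>, OF h1] by auto
qed

lemma dual_sum:
  assumes "\<phi> \<in> dual_mod sm"
  shows "\<phi> (\<Sum>i<(n::nat). g i) = (\<Sum>i<n. \<phi> (g i))"
  by (induction n) (auto simp: dualf[OF assms])



lemma sdp_LR:
  fixes sm :: "'a::comm_ring_1 \<Rightarrow> 'l::ab_group_add \<Rightarrow> 'l" and smM :: "'a \<Rightarrow> 'm::ab_group_add \<Rightarrow> 'm"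
  assumes L: "is_LR \<iota> UNIV sm br anc" and M: "is_LR_module \<iota> UNIV sm br anc UNIV smM dot"
  shows "is_LR \<iota> (UNIV \<times> dual_mod smM) (sdp_sm sm) (sdp_br br anc dot) (sdp_anc anc)"
proof -
  note l = LRf[OF L] LRg(1-6,8-10)[OF L]
  note dv = deriv[OF LRf(8)[OF L]]
  have ir: "anc x (\<iota> r) = 0" for x r using dv(7)[of x r 1] dv(6)[of x] by simp
  note m = LRMf[OF M] LRMg[OF M]
  note a1 = amod[OF l(1)] amod2[OF l(1)]
  note a2 = amod[OF m(1)] amod2[OF m(1)]
  have dmI: "\<phi> \<in> dual_mod smM" if "\<And>x y. \<phi> (x + y) = \<phi> x + \<phi> y" "\<And>a x. \<phi> (smM a x) = a * \<phi> x" for \<phi>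
    using that unfolding dual_mod_def by auto
  note df = dualf
  have dm_add: "\<phi> + \<psi> \<in> dual_mod smM" if "\<phi> \<in> dual_mod smM" "\<psi> \<in> dual_mod smM" for \<phi> \<psi>
    by (rule dmI) (auto simp: df[OF that(1)] df[OF that(2)] algebra_simps)
  have dm_neg: "- \<phi> \<in> dual_mod smM" if "\<phi> \<in> dual_mod smM" for \<phi>
    by (rule dmI) (auto simp: df[OF that(1)] algebra_simps)
  have dm_diff: "(\<lambda>m. \<phi> m - \<psi> m) \<in> dual_mod smM" if "\<phi> \<in> dual_mod smM" "\<psi> \<in> dual_mod smM" for \<phi> \<psi>
    by (rule dmI) (auto simp: df[OF that(1)] df[OF that(2)] algebra_simps)
  have dm_0: "0 \<in> dual_mod smM" by (rule dmI) auto
  have dm_sc: "(\<lambda>m. a * \<phi> m) \<in> dual_mod smM" if "\<phi> \<in> dual_mod smM" for a \<phi>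
    by (rule dmI) (auto simp: df[OF that(1)] algebra_simps)
  have dm_act: "dual_act anc dot x \<phi> \<in> dual_mod smM" if "\<phi> \<in> dual_mod smM" for x \<phi>
    by (rule dmI) (auto simp: dual_act_def df[OF that(1)] m dv algebra_simps)
  show ?thesis
    unfolding is_LR_def
  proof (intro conjI ballI allI)
    show "A_module (UNIV \<times> dual_mod smM) (sdp_sm sm)"
      unfolding A_module_def
      by (auto simp: zero_prod_def sdp_sm_def dm_0 dm_add dm_neg dm_sc a1 algebra_simps)
    fix X Y Z :: "'l \<times> ('m \<Rightarrow> 'a)" assume X: "X \<in> UNIV \<times> dual_mod smM" and Y: "Y \<in> UNIV \<times> dual_mod smM"
       and Z: "Z \<in> UNIV \<times> dual_mod smM"
    obtain x \<phi> where Xe: "X = (x, \<phi>)" and p: "\<phi> \<in> dual_mod smM" using X by auto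
    obtain y \<psi> where Ye: "Y = (y, \<psi>)" and q: "\<psi> \<in> dual_mod smM" using Y by auto
    obtain z \<chi> where Ze: "Z = (z, \<chi>)" and c: "\<chi> \<in> dual_mod smM" using Z by auto
    note simps = ir Xe Ye Ze sdp_br_def sdp_sm_def sdp_anc_def dual_act_def df[OF p] df[OF q] df[OF c] l dv m a1 a2
    show "sdp_br br anc dot X Y \<in> UNIV \<times> dual_mod smM"
      using dm_diff[OF dm_act[OF q] dm_act[OF p], of x y] by (simp add: Xe Ye sdp_br_def)
    show "sdp_br br anc dot (X + Y) Z = sdp_br br anc dot X Z + sdp_br br anc dot Y Z"
      by (auto simp: simps algebra_simps)
    show "sdp_br br anc dot X (Y + Z) = sdp_br br anc dot X Y + sdp_br br anc dot X Z"
      by (auto simp: simps algebra_simps)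
    fix r
    show "sdp_br br anc dot (sdp_sm sm (\<iota> r) X) Y = sdp_sm sm (\<iota> r) (sdp_br br anc dot X Y)"
      by (auto simp: simps algebra_simps)
    show "sdp_br br anc dot X (sdp_sm sm (\<iota> r) Y) = sdp_sm sm (\<iota> r) (sdp_br br anc dot X Y)"
      by (auto simp: simps algebra_simps)
    show "sdp_br br anc dot X X = 0" by (auto simp: simps zero_prod_def)
    show "sdp_br br anc dot X (sdp_br br anc dot Y Z) + sdp_br br anc dot Y (sdp_br br anc dot Z X) +
          sdp_br br anc dot Z (sdp_br br anc dot X Y) = 0"
      using l(7)[of x y z] by (auto simp: simps zero_prod_def algebra_simps)
    show "R_derivation \<iota> (sdp_anc anc X)" by (simp add: Xe sdp_anc_def l)
    fix a b
    show "sdp_anc anc (X + Y) a = sdp_anc anc X a + sdp_anc anc Y a" by (simp add: simps)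
    show "sdp_anc anc (sdp_sm sm (\<iota> r) X) a = \<iota> r * sdp_anc anc X a" by (simp add: simps)
    show "sdp_anc anc (sdp_br br anc dot X Y) a = sdp_anc anc X (sdp_anc anc Y a) - sdp_anc anc Y (sdp_anc anc X a)"
      by (simp add: simps)
    show "sdp_anc anc (sdp_sm sm a X) b = a * sdp_anc anc X b" by (simp add: simps)
    show "sdp_br br anc dot X (sdp_sm sm a Y) = sdp_sm sm (sdp_anc anc X a) Y + sdp_sm sm a (sdp_br br anc dot X Y)"
      by (auto simp: simps algebra_simps)
  qed
qed



locale AT =
  fixes \<iota> :: "'r::comm_ring_1 \<Rightarrow> 'a::comm_ring_1"
    and sm1 :: "'a \<Rightarrow> 'p::ab_group_add \<Rightarrow> 'p" and br1 :: "'p \<Rightarrow> 'p \<Rightarrow> 'p" and anc1 :: "'p \<Rightarrow> 'a \<Rightarrow> 'a"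
    and sm2 :: "'a \<Rightarrow> 'q::ab_group_add \<Rightarrow> 'q" and br2 :: "'q \<Rightarrow> 'q \<Rightarrow> 'q" and anc2 :: "'q \<Rightarrow> 'a \<Rightarrow> 'a"
    and dot12 :: "'p \<Rightarrow> 'q \<Rightarrow> 'q" and dot21 :: "'q \<Rightarrow> 'p \<Rightarrow> 'p"
  assumes at: "almost_twilled \<iota> sm1 br1 anc1 sm2 br2 anc2 dot12 dot21"
begin

lemma L1: "is_LR \<iota> UNIV sm1 br1 anc1" and L2: "is_LR \<iota> UNIV sm2 br2 anc2"
  and M12: "is_LR_module \<iota> UNIV sm1 br1 anc1 UNIV sm2 dot12"
  and M21: "is_LR_module \<iota> UNIV sm2 br2 anc2 UNIV sm1 dot21"
  using at unfolding almost_twilled_def by auto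

lemmas l1 = LRf(2-12)[OF L1] LRg(1-6,8-10)[OF L1]
lemmas l2 = LRf(2-12)[OF L2] LRg(1-6,8-10)[OF L2]
lemmas anti1 = LRg(7)[OF L1]
lemmas anti2 = LRg(7)[OF L2]
lemmas jac1 = LRf(7)[OF L1]
lemmas jac2 = LRf(7)[OF L2]
lemmas d1 = deriv[OF LRf(8)[OF L1]]
lemmas d2 = deriv[OF LRf(8)[OF L2]]
lemmas m12 = LRMf(2-8)[OF M12] LRMg[OF M12]
lemmas m21 = LRMf(2-8)[OF M21] LRMg[OF M21]
lemmas a1 = amod[OF LRf(1)[OF L1]] amod2[OF LRf(1)[OF L1]]
lemmas a2 = amod[OF LRf(1)[OF L2]] amod2[OF LRf(1)[OF L2]]

lemmas B = l1 l2 d1 d2 m12 m21 a1 a2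

definition "CL = UNIV \<times> dual_mod sm2"
definition "CD = UNIV \<times> dual_mod sm1"
definition "brL = sdp_br br1 anc1 dot12"
definition "brD = sdp_br br2 anc2 dot21"
definition "dst X = dstar1 brD (sdp_anc anc2) pairing_LD X"
definition "coad X d = (dot12 (fst X) (fst d),
   \<lambda>z. anc1 (fst X) (snd d z) - snd d (br1 (fst X) z) + anc1 z (snd X (fst d)) - snd X (dot12 z (fst d)))"
definition "LieD X v d1 d2 = anc1 (fst X) (v d1 d2) - v (coad X d1) d2 - v d1 (coad X d2)"

definition "C1 \<longleftrightarrow> (\<forall>x y \<eta>. dot21 \<eta> (br1 x y) = br1 x (dot21 \<eta> y) - br1 y (dot21 \<eta> x)
    + dot21 (dot12 y \<eta>) x - dot21 (dot12 x \<eta>) y)"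
definition "C2 \<longleftrightarrow> (\<forall>\<xi> \<eta> x. dot12 x (br2 \<xi> \<eta>) = br2 \<xi> (dot12 x \<eta>) - br2 \<eta> (dot12 x \<xi>)
    + dot12 (dot21 \<eta> x) \<xi> - dot12 (dot21 \<xi> x) \<eta>)"
definition "K0 \<longleftrightarrow> (\<forall>x \<xi> a. anc2 (dot12 x \<xi>) a = anc1 x (anc2 \<xi> a) - anc2 \<xi> (anc1 x a) + anc1 (dot21 \<xi> x) a)"

definition "Eq X Y d1 d2 \<longleftrightarrow> dst (brL X Y) d1 d2 = LieD X (dst Y) d1 d2 - LieD Y (dst X) d1 d2"

lemma E_from:
  assumes c1: C1 and c2: C2 and k: K0
    and p: "\<phi> \<in> dual_mod sm2" and c: "\<chi> \<in> dual_mod sm2" and al: "\<alpha> \<in> dual_mod sm1" and be: "\<beta> \<in> dual_mod sm1"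
  shows "Eq (x, \<phi>) (y, \<chi>) (\<xi>, \<alpha>) (\<eta>, \<beta>)"
proof -
  have r1: "dot21 \<eta> (br1 x y) = br1 x (dot21 \<eta> y) - br1 y (dot21 \<eta> x)
    + dot21 (dot12 y \<eta>) x - dot21 (dot12 x \<eta>) y" for x y \<eta> using c1 unfolding C1_def by blast
  have r2: "dot12 x (br2 \<xi> \<eta>) = br2 \<xi> (dot12 x \<eta>) - br2 \<eta> (dot12 x \<xi>)
    + dot12 (dot21 \<eta> x) \<xi> - dot12 (dot21 \<xi> x) \<eta>" for x \<xi> \<eta> using c2 unfolding C2_def by blast
  have r3: "anc2 (dot12 x \<xi>) a = anc1 x (anc2 \<xi> a) - anc2 \<xi> (anc1 x a) + anc1 (dot21 \<xi> x) a" for x \<xi> a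
    using k unfolding K0_def by blast
  show ?thesis
    unfolding Eq_def dst_def LieD_def coad_def dstar1_def brL_def brD_def sdp_br_def sdp_anc_def pairing_LD_def
       dual_act_def
    by (simp add: B r1 r2 r3 anti2[of "dot12 x \<xi>" \<eta>] anti2[of "dot12 y \<xi>" \<eta>] dualf[OF p] dualf[OF c] dualf[OF al] dualf[OF be] algebra_simps)
qed

end

context AT begin

lemma tw_C:
  assumes tw: "is_LR \<iota> UNIV (sum_sm sm1 sm2) (sum_br br1 br2 dot12 dot21) (sum_anc anc1 anc2)"
  shows C1 C2 K0
proof -
  note J = LRf(7)[OF tw] and AN = LRf(10)[OF tw]
  show C1 unfolding C1_def
  proof (intro allI)
    fix x y \<eta>
    have "fst (sum_br br1 br2 dot12 dot21 (x,0) (sum_br br1 br2 dot12 dot21 (y,0) (0,\<eta>)) +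
      sum_br br1 br2 dot12 dot21 (y,0) (sum_br br1 br2 dot12 dot21 (0,\<eta>) (x,0)) +
      sum_br br1 br2 dot12 dot21 (0,\<eta>) (sum_br br1 br2 dot12 dot21 (x,0) (y,0))) = 0"
      using J by simp
    then show "dot21 \<eta> (br1 x y) = br1 x (dot21 \<eta> y) - br1 y (dot21 \<eta> x)
    + dot21 (dot12 y \<eta>) x - dot21 (dot12 x \<eta>) y"
      by (simp add: sum_br_def B algebra_simps)
  qed
  show C2 unfolding C2_def
  proof (intro allI)
    fix x \<xi> \<eta>
    have "snd (sum_br br1 br2 dot12 dot21 (0,\<xi>) (sum_br br1 br2 dot12 dot21 (0,\<eta>) (x,0)) +
      sum_br br1 br2 dot12 dot21 (0,\<eta>) (sum_br br1 br2 dot12 dot21 (x,0) (0,\<xi>)) +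
      sum_br br1 br2 dot12 dot21 (x,0) (sum_br br1 br2 dot12 dot21 (0,\<xi>) (0,\<eta>))) = 0"
      using J by simp
    then show "dot12 x (br2 \<xi> \<eta>) = br2 \<xi> (dot12 x \<eta>) - br2 \<eta> (dot12 x \<xi>)
    + dot12 (dot21 \<eta> x) \<xi> - dot12 (dot21 \<xi> x) \<eta>"
      by (simp add: sum_br_def B algebra_simps)
  qed
  show K0 unfolding K0_def
  proof (intro allI)
    fix x \<xi> a
    have "sum_anc anc1 anc2 (sum_br br1 br2 dot12 dot21 (x,0) (0,\<xi>)) a =
       sum_anc anc1 anc2 (x,0) (sum_anc anc1 anc2 (0,\<xi>) a) - sum_anc anc1 anc2 (0,\<xi>) (sum_anc anc1 anc2 (x,0) a)"
      by (rule AN)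
    then show "anc2 (dot12 x \<xi>) a = anc1 x (anc2 \<xi> a) - anc2 \<xi> (anc1 x a) + anc1 (dot21 \<xi> x) a"
      by (simp add: sum_br_def sum_anc_def B algebra_simps)
  qed
qed

lemma C_tw:
  assumes c1: C1 and c2: C2 and k: K0
  shows "is_LR \<iota> UNIV (sum_sm sm1 sm2) (sum_br br1 br2 dot12 dot21) (sum_anc anc1 anc2)"
proof -
  have r1: "dot21 \<eta> (br1 x y) = br1 x (dot21 \<eta> y) - br1 y (dot21 \<eta> x)
    + dot21 (dot12 y \<eta>) x - dot21 (dot12 x \<eta>) y" for x y \<eta> using c1 unfolding C1_def by blast
  have r2: "dot12 x (br2 \<xi> \<eta>) = br2 \<xi> (dot12 x \<eta>) - br2 \<eta> (dot12 x \<xi>)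
    + dot12 (dot21 \<eta> x) \<xi> - dot12 (dot21 \<xi> x) \<eta>" for x \<xi> \<eta> using c2 unfolding C2_def by blast
  have r3: "anc2 (dot12 x \<xi>) a = anc1 x (anc2 \<xi> a) - anc2 \<xi> (anc1 x a) + anc1 (dot21 \<xi> x) a" for x \<xi> a
    using k unfolding K0_def by blast
  have ir1: "anc1 x (\<iota> r) = 0" for x r using d1(7)[of x r 1] d1(6)[of x] by simp
  have ir2: "anc2 x (\<iota> r) = 0" for x r using d2(7)[of x r 1] d2(6)[of x] by simp
  show ?thesis unfolding is_LR_def
  proof (intro conjI ballI allI)
    show "A_module UNIV (sum_sm sm1 sm2)"
      unfolding A_module_def by (auto simp: sum_sm_def B)
    fix u v w :: "'p \<times> 'q"
    obtain x \<xi> where u: "u = (x, \<xi>)" by (cases u)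
    obtain y \<eta> where v: "v = (y, \<eta>)" by (cases v)
    obtain z \<zeta> where w: "w = (z, \<zeta>)" by (cases w)
    note S = u v w sum_sm_def sum_br_def sum_anc_def B ir1 ir2
    show "sum_br br1 br2 dot12 dot21 u v \<in> UNIV" by simp
    show "sum_br br1 br2 dot12 dot21 (u + v) w = sum_br br1 br2 dot12 dot21 u w + sum_br br1 br2 dot12 dot21 v w"
      by (simp add: S algebra_simps)
    show "sum_br br1 br2 dot12 dot21 u (v + w) = sum_br br1 br2 dot12 dot21 u v + sum_br br1 br2 dot12 dot21 u w"
      by (simp add: S algebra_simps)
    fix r
    show "sum_br br1 br2 dot12 dot21 (sum_sm sm1 sm2 (\<iota> r) u) v = sum_sm sm1 sm2 (\<iota> r) (sum_br br1 br2 dot12 dot21 u v)"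
      by (simp add: S algebra_simps)
    show "sum_br br1 br2 dot12 dot21 u (sum_sm sm1 sm2 (\<iota> r) v) = sum_sm sm1 sm2 (\<iota> r) (sum_br br1 br2 dot12 dot21 u v)"
      by (simp add: S algebra_simps)
    show "sum_br br1 br2 dot12 dot21 u u = 0" by (simp add: S zero_prod_def)
    show "sum_br br1 br2 dot12 dot21 u (sum_br br1 br2 dot12 dot21 v w) +
        sum_br br1 br2 dot12 dot21 v (sum_br br1 br2 dot12 dot21 w u) +
        sum_br br1 br2 dot12 dot21 w (sum_br br1 br2 dot12 dot21 u v) = 0"
      using jac1[of x y z] jac2[of \<xi> \<eta> \<zeta>] by (simp add: S r1 r2 zero_prod_def algebra_simps)
    show "R_derivation \<iota> (sum_anc anc1 anc2 u)"
      unfolding R_derivation_def by (simp add: S algebra_simps)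
    fix a b
    show "sum_anc anc1 anc2 (u + v) a = sum_anc anc1 anc2 u a + sum_anc anc1 anc2 v a" by (simp add: S)
    show "sum_anc anc1 anc2 (sum_sm sm1 sm2 (\<iota> r) u) a = \<iota> r * sum_anc anc1 anc2 u a" by (simp add: S algebra_simps)
    show "sum_anc anc1 anc2 (sum_br br1 br2 dot12 dot21 u v) a =
        sum_anc anc1 anc2 u (sum_anc anc1 anc2 v a) - sum_anc anc1 anc2 v (sum_anc anc1 anc2 u a)"
      by (simp add: S r3 algebra_simps)
    show "sum_anc anc1 anc2 (sum_sm sm1 sm2 a u) b = a * sum_anc anc1 anc2 u b" by (simp add: S algebra_simps)
    show "sum_br br1 br2 dot12 dot21 u (sum_sm sm1 sm2 a v) =
        sum_sm sm1 sm2 (sum_anc anc1 anc2 u a) v + sum_sm sm1 sm2 a (sum_br br1 br2 dot12 dot21 u v)"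
      by (simp add: S algebra_simps)
  qed
qed

end


lemma addsum:
  fixes f :: "'x::ab_group_add \<Rightarrow> 'y::ab_group_add"
  assumes "\<And>x y. f (x + y) = f x + f y"
  shows "f (\<Sum>i<(n::nat). g i) = (\<Sum>i<n. f (g i))"
  by (induction n) (auto simp: assms addhom(1)[of f, OF assms])

lemma sep:
  assumes fg: "fg_projective sm" and A: "A_module UNIV sm"
    and h: "\<And>\<phi>. \<phi> \<in> dual_mod sm \<Longrightarrow> \<phi> u = 0"
  shows "u = 0"
proof -
  obtain n e f where f: "\<forall>i<(n::nat). f i \<in> dual_mod sm" and x: "\<forall>x. x = (\<Sum>i<n. sm (f i x) (e i))"
    using fg unfolding fg_projective_def by blast
  have "u = (\<Sum>i<n. sm (f i u) (e i))" using x by blast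
  also have "\<dots> = (\<Sum>i<n. sm 0 (e i))"
  proof (intro sum.cong refl)
    fix i assume "i \<in> {..<n}" then have "f i u = 0" using h f by blast
    then show "sm (f i u) (e i) = sm 0 (e i)" by simp
  qed
  also have "\<dots> = 0" by (simp add: amod2[OF A])
  finally show ?thesis .
qed

context AT begin

lemma Eq_C1:
  assumes fg1: "fg_projective sm1"
    and E: "\<And>y \<eta> \<beta>. \<beta> \<in> dual_mod sm1 \<Longrightarrow> Eq (x, 0) (y, 0) (\<eta>, 0) (0, \<beta>)"
  shows "dot21 \<eta> (br1 x y) = br1 x (dot21 \<eta> y) - br1 y (dot21 \<eta> x)
    + dot21 (dot12 y \<eta>) x - dot21 (dot12 x \<eta>) y"
proof -
  let ?u = "dot21 \<eta> (br1 x y) - (br1 x (dot21 \<eta> y) - br1 y (dot21 \<eta> x)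
    + dot21 (dot12 y \<eta>) x - dot21 (dot12 x \<eta>) y)"
  have "?u = 0"
  proof (rule sep[OF fg1 LRf(1)[OF L1]])
    fix \<beta> assume be: "\<beta> \<in> dual_mod sm1"
    show "\<beta> ?u = 0" using E[OF be, of y \<eta>]
      unfolding Eq_def dst_def LieD_def coad_def dstar1_def brL_def brD_def sdp_br_def sdp_anc_def pairing_LD_def
       dual_act_def
      by (simp add: B dualf[OF be] algebra_simps)
  qed
  then show ?thesis by simp
qed

lemma C1_K0:
  assumes fg1: "fg_projective sm1" and c1: C1
  shows K0
proof -
  have r1: "\<And>x y \<eta>. dot21 \<eta> (br1 x y) = br1 x (dot21 \<eta> y) - br1 y (dot21 \<eta> x)
    + dot21 (dot12 y \<eta>) x - dot21 (dot12 x \<eta>) y" using c1 unfolding C1_def by blast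
  have brs: "br1 (sm1 a x) y = sm1 a (br1 x y) - sm1 (anc1 y a) x" for a x y
    using anti1[of "sm1 a x" y] anti1[of x y] by (simp add: B)
  define K where "K x \<eta> a = anc1 x (anc2 \<eta> a) - anc2 \<eta> (anc1 x a) - anc2 (dot12 x \<eta>) a + anc1 (dot21 \<eta> x) a" for x \<eta> a
  have Ky: "sm1 (K x \<eta> a) y = 0" for x y \<eta> a
    using r1[of \<eta> x "sm1 a y"] r1[of \<eta> x y] unfolding K_def by (simp add: B brs algebra_simps)
  have Klin: "K (sm1 b x) \<eta> a = b * K x \<eta> a" for b x \<eta> a
    unfolding K_def by (simp add: B algebra_simps)
  have Kadd: "K (x + y) \<eta> a = K x \<eta> a + K y \<eta> a" for x y \<eta> a
    unfolding K_def by (simp add: B algebra_simps)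
  obtain n e f where f: "\<forall>i<(n::nat). f i \<in> dual_mod sm1" and x: "\<forall>x. x = (\<Sum>i<n. sm1 (f i x) (e i))"
    using fg1 unfolding fg_projective_def by blast
  have K0': "K x \<eta> a = 0" for x \<eta> a
  proof -
    have "K x \<eta> a = K (\<Sum>i<n. sm1 (f i x) (e i)) \<eta> a" using x by metis
    also have "\<dots> = (\<Sum>i<n. K (sm1 (f i x) (e i)) \<eta> a)"
      by (rule addsum[of "\<lambda>x. K x \<eta> a"]) (rule Kadd)
    also have "\<dots> = (\<Sum>i<n. f i (sm1 (K (e i) \<eta> a) x))"
      using f by (intro sum.cong) (auto simp: Klin dualf)
    also have "\<dots> = 0"
    proof (rule sum.neutral, intro ballI)
      fix i assume "i \<in> {..<n}" then have "f i \<in> dual_mod sm1" using f by auto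
      then show "f i (sm1 (K (e i) \<eta> a) x) = 0" by (simp add: Ky dualf)
    qed
    finally show ?thesis .
  qed
  show K0 unfolding K0_def using K0' unfolding K_def by (simp add: algebra_simps)
qed

lemma Eq_C2:
  assumes fg2: "fg_projective sm2" and k: K0
    and E: "\<And>\<phi>. \<phi> \<in> dual_mod sm2 \<Longrightarrow> Eq (x, 0) (0, \<phi>) (\<xi>, 0) (\<eta>, 0)"
  shows "dot12 x (br2 \<xi> \<eta>) = br2 \<xi> (dot12 x \<eta>) - br2 \<eta> (dot12 x \<xi>)
    + dot12 (dot21 \<eta> x) \<xi> - dot12 (dot21 \<xi> x) \<eta>"
proof -
  have r3: "anc2 (dot12 x \<xi>) a = anc1 x (anc2 \<xi> a) - anc2 \<xi> (anc1 x a) + anc1 (dot21 \<xi> x) a" for x \<xi> a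
    using k unfolding K0_def by blast
  let ?u = "dot12 x (br2 \<xi> \<eta>) - (br2 \<xi> (dot12 x \<eta>) - br2 \<eta> (dot12 x \<xi>)
    + dot12 (dot21 \<eta> x) \<xi> - dot12 (dot21 \<xi> x) \<eta>)"
  have "?u = 0"
  proof (rule sep[OF fg2 LRf(1)[OF L2]])
    fix \<phi> assume p: "\<phi> \<in> dual_mod sm2"
    show "\<phi> ?u = 0" using E[OF p]
      unfolding Eq_def dst_def LieD_def coad_def dstar1_def brL_def brD_def sdp_br_def sdp_anc_def pairing_LD_def
       dual_act_def
      by (simp add: B r3 anti2[of "dot12 x \<xi>" \<eta>] dualf[OF p] algebra_simps)
  qed
  then show ?thesis by simp
qed

end


lemma dm_lincomb:
  assumes "\<And>l. l \<in> S \<Longrightarrow> g l \<in> dual_mod sm"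
  shows "(\<lambda>q. \<Sum>l\<in>S. c l * g l q) \<in> dual_mod sm"
  unfolding dual_mod_def
proof (intro CollectI conjI allI)
  fix x y
  show "(\<Sum>l\<in>S. c l * g l (x + y)) = (\<Sum>l\<in>S. c l * g l x) + (\<Sum>l\<in>S. c l * g l y)"
    by (simp add: sum.distrib[symmetric] distrib_left[symmetric] dualf(1)[OF assms] cong: sum.cong)
next
  fix a x
  show "(\<Sum>l\<in>S. c l * g l (sm a x)) = a * (\<Sum>l\<in>S. c l * g l x)"
    by (simp add: sum_distrib_left dualf(2)[OF assms] algebra_simps cong: sum.cong)
qed

lemma sum_split_add:
  "(\<Sum>k<(m::nat)+n. F k) = (\<Sum>k<m. F k) + (\<Sum>k<n. F (m + k))"
  by (induction n) (simp_all add: algebra_simps)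

lemma comb:
  fixes c :: "nat \<Rightarrow> nat \<Rightarrow> 'a::comm_ring"
  assumes anti: "\<And>j l. c j l = - c l j" and diag: "\<And>j. c j j = 0"
  shows "(\<Sum>j<n. \<Sum>l<n. c j l * (a j * b l)) = (\<Sum>j<n. \<Sum>l\<in>{j<..<n}. c j l * (a j * b l - a l * b j))"
proof (induction n)
  case 0 then show ?case by simp
next
  case (Suc n)
  have e: "{j<..<Suc n} = insert n {j<..<n}" if "j < n" for j using that by auto
  have emp: "{n<..<Suc n} = {}" by auto
  have "(\<Sum>j<Suc n. \<Sum>l\<in>{j<..<Suc n}. c j l * (a j * b l - a l * b j))
     = (\<Sum>j<n. \<Sum>l\<in>{j<..<Suc n}. c j l * (a j * b l - a l * b j))"
    using emp by simp
  also have "\<dots> = (\<Sum>j<n. (\<Sum>l\<in>{j<..<n}. c j l * (a j * b l - a l * b j)) + c j n * (a j * b n - a n * b j))"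
    by (intro sum.cong refl) (simp add: e add.commute)
  also have "\<dots> = (\<Sum>j<n. \<Sum>l<n. c j l * (a j * b l)) + (\<Sum>j<n. c j n * (a j * b n - a n * b j))"
    by (simp add: sum.distrib Suc)
  finally have R: "(\<Sum>j<Suc n. \<Sum>l\<in>{j<..<Suc n}. c j l * (a j * b l - a l * b j))
     = (\<Sum>j<n. \<Sum>l<n. c j l * (a j * b l)) + (\<Sum>j<n. c j n * (a j * b n - a n * b j))" .
  have L: "(\<Sum>j<Suc n. \<Sum>l<Suc n. c j l * (a j * b l)) = (\<Sum>j<n. \<Sum>l<n. c j l * (a j * b l))
     + (\<Sum>j<n. c j n * (a j * b n)) + (\<Sum>l<n. c n l * (a n * b l))"
    by (simp add: sum.distrib diag)
  have "(\<Sum>l<n. c n l * (a n * b l)) = (\<Sum>j<n. - c j n * (a n * b j))"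
    by (intro sum.cong refl) (simp add: anti[of n])
  then show ?case unfolding L R
    by (simp add: sum_subtractf sum_negf right_diff_distrib algebra_simps)
qed

context AT begin

lemma coad_in: "X \<in> CL \<Longrightarrow> d \<in> CD \<Longrightarrow> coad X d \<in> CD"
  unfolding CL_def CD_def coad_def dual_mod_def
  by (auto simp: B dualf algebra_simps)

lemma pr_coad:
  assumes "X \<in> CL" "z \<in> CL" "d \<in> CD"
  shows "pairing_LD z (coad X d) = anc1 (fst X) (pairing_LD z d) - pairing_LD (brL X z) d"
  using assms unfolding CL_def CD_def coad_def pairing_LD_def brL_def sdp_br_def dual_act_def
  by (auto simp: B dualf algebra_simps)

lemma pr_brr:
  assumes "X \<in> CL" "z \<in> CL" "d \<in> CD"
  shows "pairing_LD (brL z X) d = pairing_LD z (coad X d) - anc1 (fst X) (pairing_LD z d)"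
proof -
  obtain x \<phi> where X: "X = (x, \<phi>)" "\<phi> \<in> dual_mod sm2" using assms(1) unfolding CL_def by auto
  obtain y \<psi> where Z: "z = (y, \<psi>)" "\<psi> \<in> dual_mod sm2" using assms(2) unfolding CL_def by auto
  obtain \<xi> \<delta> where D: "d = (\<xi>, \<delta>)" "\<delta> \<in> dual_mod sm1" using assms(3) unfolding CD_def by auto
  show ?thesis
    unfolding X Z D coad_def pairing_LD_def brL_def sdp_br_def dual_act_def
    using X(2) Z(2) D(2) anti1[of y x] by (simp add: B dualf algebra_simps)
qed

lemma anc_sum: "anc1 x (\<Sum>i<(n::nat). g i) = (\<Sum>i<n. anc1 x (g i))"
  by (rule addsum) (simp add: B)

lemma gb21:
  assumes g: "gb_2_1 CL CD brL pairing_LD u y w" and y: "y \<in> CL" and dd: "d1 \<in> CD" "d2 \<in> CD"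
  shows "w d1 d2 = u (coad y d1) d2 + u d1 (coad y d2) - anc1 (fst y) (u d1 d2)"
proof -
  obtain n \<alpha> \<beta> where ab: "\<forall>i<(n::nat). \<alpha> i \<in> CL \<and> \<beta> i \<in> CL" and
    rep: "\<forall>d1\<in>CD. \<forall>d2\<in>CD. u d1 d2 = (\<Sum>i<n. wedge2 pairing_LD (\<alpha> i) (\<beta> i) d1 d2)
        \<and> w d1 d2 = (\<Sum>i<n. wedge2 pairing_LD (brL (\<alpha> i) y) (\<beta> i) d1 d2 + wedge2 pairing_LD (\<alpha> i) (brL (\<beta> i) y) d1 d2)"
    using g unfolding gb_2_1_def by blast
  have c1: "coad y d1 \<in> CD" and c2: "coad y d2 \<in> CD" using coad_in y dd by auto
  have "w d1 d2 = (\<Sum>i<n. wedge2 pairing_LD (brL (\<alpha> i) y) (\<beta> i) d1 d2 + wedge2 pairing_LD (\<alpha> i) (brL (\<beta> i) y) d1 d2)"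
    using rep dd by blast
  also have "\<dots> = (\<Sum>i<n. wedge2 pairing_LD (\<alpha> i) (\<beta> i) (coad y d1) d2 + wedge2 pairing_LD (\<alpha> i) (\<beta> i) d1 (coad y d2)
      - anc1 (fst y) (wedge2 pairing_LD (\<alpha> i) (\<beta> i) d1 d2))"
  proof (intro sum.cong refl)
    fix i assume "i \<in> {..<n}"
    then have a: "\<alpha> i \<in> CL" and b: "\<beta> i \<in> CL" using ab by auto
    show "wedge2 pairing_LD (brL (\<alpha> i) y) (\<beta> i) d1 d2 + wedge2 pairing_LD (\<alpha> i) (brL (\<beta> i) y) d1 d2 =
      wedge2 pairing_LD (\<alpha> i) (\<beta> i) (coad y d1) d2 + wedge2 pairing_LD (\<alpha> i) (\<beta> i) d1 (coad y d2)
      - anc1 (fst y) (wedge2 pairing_LD (\<alpha> i) (\<beta> i) d1 d2)"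
      unfolding wedge2_def using y a b dd
      by (simp add: pr_brr B algebra_simps)
  qed
  also have "\<dots> = (\<Sum>i<n. wedge2 pairing_LD (\<alpha> i) (\<beta> i) (coad y d1) d2) + (\<Sum>i<n. wedge2 pairing_LD (\<alpha> i) (\<beta> i) d1 (coad y d2))
      - anc1 (fst y) (\<Sum>i<n. wedge2 pairing_LD (\<alpha> i) (\<beta> i) d1 d2)"
    by (simp add: anc_sum sum.distrib sum_subtractf)
  also have "\<dots> = u (coad y d1) d2 + u d1 (coad y d2) - anc1 (fst y) (u d1 d2)"
    using rep dd c1 c2 by simp
  finally show ?thesis .
qed

lemma gb12:
  assumes g: "gb_1_2 CL CD brL pairing_LD x v w" and x: "x \<in> CL" and dd: "d1 \<in> CD" "d2 \<in> CD"
  shows "w d1 d2 = anc1 (fst x) (v d1 d2) - v (coad x d1) d2 - v d1 (coad x d2)"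
proof -
  obtain n \<alpha> \<beta> where ab: "\<forall>i<(n::nat). \<alpha> i \<in> CL \<and> \<beta> i \<in> CL" and
    rep: "\<forall>d1\<in>CD. \<forall>d2\<in>CD. v d1 d2 = (\<Sum>i<n. wedge2 pairing_LD (\<alpha> i) (\<beta> i) d1 d2)
        \<and> w d1 d2 = (\<Sum>i<n. wedge2 pairing_LD (brL x (\<alpha> i)) (\<beta> i) d1 d2 + wedge2 pairing_LD (\<alpha> i) (brL x (\<beta> i)) d1 d2)"
    using g unfolding gb_1_2_def by blast
  have c1: "coad x d1 \<in> CD" and c2: "coad x d2 \<in> CD" using coad_in x dd by auto
  have "w d1 d2 = (\<Sum>i<n. wedge2 pairing_LD (brL x (\<alpha> i)) (\<beta> i) d1 d2 + wedge2 pairing_LD (\<alpha> i) (brL x (\<beta> i)) d1 d2)"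
    using rep dd by blast
  also have "\<dots> = (\<Sum>i<n. anc1 (fst x) (wedge2 pairing_LD (\<alpha> i) (\<beta> i) d1 d2) 
      - wedge2 pairing_LD (\<alpha> i) (\<beta> i) (coad x d1) d2 - wedge2 pairing_LD (\<alpha> i) (\<beta> i) d1 (coad x d2))"
  proof (intro sum.cong refl)
    fix i assume "i \<in> {..<n}"
    then have a: "\<alpha> i \<in> CL" and b: "\<beta> i \<in> CL" using ab by auto
    have e1: "pairing_LD (brL x z) d = anc1 (fst x) (pairing_LD z d) - pairing_LD z (coad x d)"
      if "z \<in> CL" "d \<in> CD" for z d using pr_coad[OF x that] by simp
    show "wedge2 pairing_LD (brL x (\<alpha> i)) (\<beta> i) d1 d2 + wedge2 pairing_LD (\<alpha> i) (brL x (\<beta> i)) d1 d2 =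
      anc1 (fst x) (wedge2 pairing_LD (\<alpha> i) (\<beta> i) d1 d2) 
      - wedge2 pairing_LD (\<alpha> i) (\<beta> i) (coad x d1) d2 - wedge2 pairing_LD (\<alpha> i) (\<beta> i) d1 (coad x d2)"
      unfolding wedge2_def using a b dd
      by (simp add: e1 B algebra_simps)
  qed
  also have "\<dots> = anc1 (fst x) (\<Sum>i<n. wedge2 pairing_LD (\<alpha> i) (\<beta> i) d1 d2)
      - (\<Sum>i<n. wedge2 pairing_LD (\<alpha> i) (\<beta> i) (coad x d1) d2) - (\<Sum>i<n. wedge2 pairing_LD (\<alpha> i) (\<beta> i) d1 (coad x d2))"
    by (simp add: anc_sum sum.distrib sum_subtractf)
  also have "\<dots> = anc1 (fst x) (v d1 d2) - v (coad x d1) d2 - v d1 (coad x d2)"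
    using rep dd c1 c2 by simp
  finally show ?thesis .
qed

end

context AT begin

lemma brs2: "br2 (sm2 a x) y = sm2 a (br2 x y) - sm2 (anc2 y a) x"
  using anti2[of "sm2 a x" y] anti2[of x y] by (simp add: B)

lemma dst_repr:
  assumes fg1: "fg_projective sm1" and fg2: "fg_projective sm2" and X: "X \<in> CL"
  shows "\<exists>(n::nat) \<alpha> \<beta>. (\<forall>i<n. \<alpha> i \<in> CL \<and> \<beta> i \<in> CL) \<and>
     (\<forall>d1\<in>CD. \<forall>d2\<in>CD. dst X d1 d2 = (\<Sum>i<n. wedge2 pairing_LD (\<alpha> i) (\<beta> i) d1 d2))"
proof -
  obtain x \<phi> where Xe: "X = (x, \<phi>)" and p: "\<phi> \<in> dual_mod sm2" using X unfolding CL_def by auto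
  obtain n1 e1 f1 where f1: "\<forall>i<(n1::nat). f1 i \<in> dual_mod sm1" and x1: "\<forall>x. x = (\<Sum>i<n1. sm1 (f1 i x) (e1 i))"
    using fg1 unfolding fg_projective_def by blast
  obtain n2 e2 f2 where f2: "\<forall>i<(n2::nat). f2 i \<in> dual_mod sm2" and x2: "\<forall>x. x = (\<Sum>i<n2. sm2 (f2 i x) (e2 i))"
    using fg2 unfolding fg_projective_def by blast
  define \<Phi> where "\<Phi> \<xi> \<eta> = anc2 \<xi> (\<phi> \<eta>) - anc2 \<eta> (\<phi> \<xi>) - \<phi> (br2 \<xi> \<eta>)" for \<xi> \<eta>
  have dexp: "dst X (\<xi>, \<alpha>) (\<eta>, \<beta>) = \<Phi> \<xi> \<eta> + \<beta> (dot21 \<xi> x) - \<alpha> (dot21 \<eta> x)"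
    if "\<alpha> \<in> dual_mod sm1" "\<beta> \<in> dual_mod sm1" for \<xi> \<eta> \<alpha> \<beta>
    using that unfolding Xe \<Phi>_def dst_def dstar1_def brD_def sdp_br_def sdp_anc_def pairing_LD_def dual_act_def
    by (simp add: B dualf algebra_simps)
  have Padd1: "\<Phi> (a + b) \<eta> = \<Phi> a \<eta> + \<Phi> b \<eta>" for a b \<eta>
    unfolding \<Phi>_def by (simp add: B dualf[OF p] algebra_simps)
  have Plin1: "\<Phi> (sm2 c a) \<eta> = c * \<Phi> a \<eta>" for a c \<eta>
    unfolding \<Phi>_def by (simp add: B brs2 dualf[OF p] algebra_simps)
  have Padd2: "\<Phi> \<eta> (a + b) = \<Phi> \<eta> a + \<Phi> \<eta> b" for a b \<eta>
    unfolding \<Phi>_def by (simp add: B dualf[OF p] algebra_simps)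
  have Plin2: "\<Phi> \<eta> (sm2 c a) = c * \<Phi> \<eta> a" for a c \<eta>
    unfolding \<Phi>_def by (simp add: B dualf[OF p] algebra_simps)
  have Panti: "\<Phi> a b = - \<Phi> b a" for a b
    unfolding \<Phi>_def using anti2[of a b] by (simp add: B dualf[OF p] algebra_simps)
  have Pdiag: "\<Phi> a a = 0" for a
    unfolding \<Phi>_def by (simp add: B dualf[OF p])
  have Pexp: "\<Phi> \<xi> \<eta> = (\<Sum>j<n2. \<Sum>l<n2. \<Phi> (e2 j) (e2 l) * (f2 j \<xi> * f2 l \<eta>))" for \<xi> \<eta>
  proof -
    have "\<Phi> \<xi> \<eta> = \<Phi> (\<Sum>j<n2. sm2 (f2 j \<xi>) (e2 j)) \<eta>" using x2 by metis
    also have "\<dots> = (\<Sum>j<n2. \<Phi> (sm2 (f2 j \<xi>) (e2 j)) \<eta>)"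
      by (rule addsum[of "\<lambda>a. \<Phi> a \<eta>"]) (rule Padd1)
    also have "\<dots> = (\<Sum>j<n2. f2 j \<xi> * \<Phi> (e2 j) (\<Sum>l<n2. sm2 (f2 l \<eta>) (e2 l)))"
      using x2 by (simp add: Plin1)
    also have "\<dots> = (\<Sum>j<n2. f2 j \<xi> * (\<Sum>l<n2. f2 l \<eta> * \<Phi> (e2 j) (e2 l)))"
    proof (intro sum.cong refl)
      fix j
      have "\<Phi> (e2 j) (\<Sum>l<n2. sm2 (f2 l \<eta>) (e2 l)) = (\<Sum>l<n2. \<Phi> (e2 j) (sm2 (f2 l \<eta>) (e2 l)))"
        by (rule addsum[of "\<lambda>a. \<Phi> (e2 j) a"]) (rule Padd2)
      then show "f2 j \<xi> * \<Phi> (e2 j) (\<Sum>l<n2. sm2 (f2 l \<eta>) (e2 l)) = f2 j \<xi> * (\<Sum>l<n2. f2 l \<eta> * \<Phi> (e2 j) (e2 l))"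
        by (simp add: Plin2)
    qed
    also have "\<dots> = (\<Sum>j<n2. \<Sum>l<n2. \<Phi> (e2 j) (e2 l) * (f2 j \<xi> * f2 l \<eta>))"
      by (simp add: sum_distrib_left algebra_simps)
    finally show ?thesis .
  qed
  define \<theta> where "\<theta> j = (\<lambda>q. \<Sum>l\<in>{j<..<n2}. \<Phi> (e2 j) (e2 l) * f2 l q)" for j
  define \<tau> where "\<tau> i = (\<lambda>q. f1 i (dot21 q x))" for i
  have th_in: "\<theta> j \<in> dual_mod sm2" for j
    unfolding \<theta>_def by (rule dm_lincomb) (use f2 in auto)
  have tau_in: "\<tau> i \<in> dual_mod sm2" if "i < n1" for i
  proof -
    have "f1 i \<in> dual_mod sm1" using f1 that by auto
    then show ?thesis unfolding \<tau>_def dual_mod_def by (simp add: B dualf)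
  qed
  have z_in: "(0::'q \<Rightarrow> 'a) \<in> dual_mod sm2" unfolding dual_mod_def by simp
  define \<alpha>' where "\<alpha>' k = (if k < n2 then (0::'p, f2 k) else (0, \<tau> (k - n2)))" for k
  define \<beta>' where "\<beta>' k = (if k < n2 then (0::'p, \<theta> k) else (e1 (k - n2), 0))" for k
  show ?thesis
  proof (intro exI conjI allI impI ballI)
    fix i assume "i < n2 + n1"
    then show "\<alpha>' i \<in> CL" "\<beta>' i \<in> CL"
      unfolding \<alpha>'_def \<beta>'_def CL_def using f2 tau_in th_in z_in by auto
  next
    fix d1 d2 :: "'q \<times> ('p \<Rightarrow> 'a)" assume d1: "d1 \<in> CD" and d2: "d2 \<in> CD"
    obtain \<xi> \<alpha> where D1: "d1 = (\<xi>, \<alpha>)" and al: "\<alpha> \<in> dual_mod sm1" using d1 unfolding CD_def by auto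
    obtain \<eta> \<beta> where D2: "d2 = (\<eta>, \<beta>)" and be: "\<beta> \<in> dual_mod sm1" using d2 unfolding CD_def by auto
    have A: "(\<Sum>k<n2. wedge2 pairing_LD (\<alpha>' k) (\<beta>' k) d1 d2) = \<Phi> \<xi> \<eta>"
    proof -
      have "(\<Sum>k<n2. wedge2 pairing_LD (\<alpha>' k) (\<beta>' k) d1 d2) =
        (\<Sum>j<n2. \<Sum>l\<in>{j<..<n2}. \<Phi> (e2 j) (e2 l) * (f2 j \<xi> * f2 l \<eta> - f2 l \<xi> * f2 j \<eta>))"
      proof (intro sum.cong refl)
        fix k assume "k \<in> {..<n2}"
        then show "wedge2 pairing_LD (\<alpha>' k) (\<beta>' k) d1 d2 =
          (\<Sum>l\<in>{k<..<n2}. \<Phi> (e2 k) (e2 l) * (f2 k \<xi> * f2 l \<eta> - f2 l \<xi> * f2 k \<eta>))"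
          unfolding \<alpha>'_def \<beta>'_def wedge2_def pairing_LD_def D1 D2 \<theta>_def
          by (simp add: dualf[OF al] dualf[OF be] sum_distrib_left sum_subtractf[symmetric] algebra_simps)
      qed
      also have "\<dots> = \<Phi> \<xi> \<eta>"
        unfolding Pexp[of \<xi> \<eta>] by (rule comb[symmetric]) (rule Panti, rule Pdiag)
      finally show ?thesis .
    qed
    have B2: "(\<Sum>k<n1. wedge2 pairing_LD (\<alpha>' (n2 + k)) (\<beta>' (n2 + k)) d1 d2) = \<beta> (dot21 \<xi> x) - \<alpha> (dot21 \<eta> x)"
    proof -
      have "(\<Sum>k<n1. wedge2 pairing_LD (\<alpha>' (n2 + k)) (\<beta>' (n2 + k)) d1 d2) =
        (\<Sum>k<n1. f1 k (dot21 \<xi> x) * \<beta> (e1 k)) - (\<Sum>k<n1. f1 k (dot21 \<eta> x) * \<alpha> (e1 k))"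
        unfolding \<alpha>'_def \<beta>'_def wedge2_def pairing_LD_def D1 D2 \<tau>_def
        by (simp add: dualf[OF al] dualf[OF be] sum_subtractf)
      also have "\<dots> = \<beta> (\<Sum>k<n1. sm1 (f1 k (dot21 \<xi> x)) (e1 k)) - \<alpha> (\<Sum>k<n1. sm1 (f1 k (dot21 \<eta> x)) (e1 k))"
        by (simp add: dual_sum[OF al] dual_sum[OF be] dualf[OF al] dualf[OF be])
      also have "\<dots> = \<beta> (dot21 \<xi> x) - \<alpha> (dot21 \<eta> x)" using x1 by metis
      finally show ?thesis .
    qed
    show "dst X d1 d2 = (\<Sum>i<n2 + n1. wedge2 pairing_LD (\<alpha>' i) (\<beta>' i) d1 d2)"
      unfolding sum_split_add A B2 using dexp[OF al be] D1 D2 by simp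
  qed
qed

end

context AT begin

lemma Eq_all_iff_C:
  assumes fg1: "fg_projective sm1" and fg2: "fg_projective sm2"
  shows "(\<forall>X\<in>CL. \<forall>Y\<in>CL. \<forall>d1\<in>CD. \<forall>d2\<in>CD. Eq X Y d1 d2) \<longleftrightarrow> C1 \<and> C2 \<and> K0"
proof
  assume E: "\<forall>X\<in>CL. \<forall>Y\<in>CL. \<forall>d1\<in>CD. \<forall>d2\<in>CD. Eq X Y d1 d2"
  have z1: "(0::'p \<Rightarrow> 'a) \<in> dual_mod sm1" and z2: "(0::'q \<Rightarrow> 'a) \<in> dual_mod sm2"
    unfolding dual_mod_def by simp_all
  have c1: C1 unfolding C1_def
  proof (intro allI)
    fix x y \<eta>
    show "dot21 \<eta> (br1 x y) = br1 x (dot21 \<eta> y) - br1 y (dot21 \<eta> x)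
      + dot21 (dot12 y \<eta>) x - dot21 (dot12 x \<eta>) y"
      by (rule Eq_C1[OF fg1]) (use E z1 z2 in \<open>auto simp: CL_def CD_def\<close>)
  qed
  have k: K0 by (rule C1_K0[OF fg1 c1])
  have c2: C2 unfolding C2_def
  proof (intro allI)
    fix x \<xi> \<eta>
    show "dot12 x (br2 \<xi> \<eta>) = br2 \<xi> (dot12 x \<eta>) - br2 \<eta> (dot12 x \<xi>)
      + dot12 (dot21 \<eta> x) \<xi> - dot12 (dot21 \<xi> x) \<eta>"
      by (rule Eq_C2[OF fg2 k]) (use E z1 z2 in \<open>auto simp: CL_def CD_def\<close>)
  qed
  show "C1 \<and> C2 \<and> K0" using c1 c2 k by simp
next
  assume "C1 \<and> C2 \<and> K0"
  then show "\<forall>X\<in>CL. \<forall>Y\<in>CL. \<forall>d1\<in>CD. \<forall>d2\<in>CD. Eq X Y d1 d2"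
    unfolding CL_def CD_def using E_from by auto
qed

lemma bialg_iff_Eq:
  assumes fg1: "fg_projective sm1" and fg2: "fg_projective sm2"
  shows "LR_bialgebra \<iota>
           (UNIV \<times> dual_mod sm2) (sdp_sm sm1) (sdp_br br1 anc1 dot12) (sdp_anc anc1)
           (UNIV \<times> dual_mod sm1) (sdp_sm sm2) (sdp_br br2 anc2 dot21) (sdp_anc anc2)
           pairing_LD \<longleftrightarrow> (\<forall>X\<in>CL. \<forall>Y\<in>CL. \<forall>d1\<in>CD. \<forall>d2\<in>CD. Eq X Y d1 d2)"
proof -
  have LRL: "is_LR \<iota> (UNIV \<times> dual_mod sm2) (sdp_sm sm1) (sdp_br br1 anc1 dot12) (sdp_anc anc1)"
    by (rule sdp_LR[OF L1 M12])
  have LRD: "is_LR \<iota> (UNIV \<times> dual_mod sm1) (sdp_sm sm2) (sdp_br br2 anc2 dot21) (sdp_anc anc2)"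
    by (rule sdp_LR[OF L2 M21])
  have dd: "dstar1 (sdp_br br2 anc2 dot21) (sdp_anc anc2) pairing_LD = dst"
    unfolding dst_def brD_def by (rule ext) simp
  have "(\<forall>x\<in>CL. \<forall>y\<in>CL. \<exists>w1 w2.
        gb_2_1 CL CD brL pairing_LD (dst x) y w1
      \<and> gb_1_2 CL CD brL pairing_LD x (dst y) w2
      \<and> (\<forall>d1\<in>CD. \<forall>d2\<in>CD. dst (brL x y) d1 d2 = w1 d1 d2 + w2 d1 d2))
      \<longleftrightarrow> (\<forall>X\<in>CL. \<forall>Y\<in>CL. \<forall>d1\<in>CD. \<forall>d2\<in>CD. Eq X Y d1 d2)" (is "?A \<longleftrightarrow> ?B")
  proof
    assume A: ?A
    show ?B
    proof (intro ballI)
      fix X Y :: "'p \<times> ('q \<Rightarrow> 'a)" and d1 d2 :: "'q \<times> ('p \<Rightarrow> 'a)" assume X: "X \<in> CL" and Y: "Y \<in> CL" and d1: "d1 \<in> CD" and d2: "d2 \<in> CD"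
      obtain w1 w2 where g1: "gb_2_1 CL CD brL pairing_LD (dst X) Y w1"
        and g2: "gb_1_2 CL CD brL pairing_LD X (dst Y) w2"
        and e: "\<forall>d1\<in>CD. \<forall>d2\<in>CD. dst (brL X Y) d1 d2 = w1 d1 d2 + w2 d1 d2"
        using A X Y by blast
      show "Eq X Y d1 d2"
        unfolding Eq_def LieD_def using e d1 d2 gb21[OF g1 Y d1 d2] gb12[OF g2 X d1 d2] by simp
    qed
  next
    assume B: ?B
    show ?A
    proof (intro ballI)
      fix X Y :: "'p \<times> ('q \<Rightarrow> 'a)" assume X: "X \<in> CL" and Y: "Y \<in> CL"
      obtain n \<alpha> \<beta> where ab: "\<forall>i<(n::nat). \<alpha> i \<in> CL \<and> \<beta> i \<in> CL"
        and rX: "\<forall>d1\<in>CD. \<forall>d2\<in>CD. dst X d1 d2 = (\<Sum>i<n. wedge2 pairing_LD (\<alpha> i) (\<beta> i) d1 d2)"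
        using dst_repr[OF fg1 fg2 X] by blast
      obtain m \<gamma> \<delta> where cd: "\<forall>i<(m::nat). \<gamma> i \<in> CL \<and> \<delta> i \<in> CL"
        and rY: "\<forall>d1\<in>CD. \<forall>d2\<in>CD. dst Y d1 d2 = (\<Sum>i<m. wedge2 pairing_LD (\<gamma> i) (\<delta> i) d1 d2)"
        using dst_repr[OF fg1 fg2 Y] by blast
      define w1 where "w1 d1 d2 = (\<Sum>i<n. wedge2 pairing_LD (brL (\<alpha> i) Y) (\<beta> i) d1 d2
         + wedge2 pairing_LD (\<alpha> i) (brL (\<beta> i) Y) d1 d2)" for d1 d2
      define w2 where "w2 d1 d2 = (\<Sum>i<m. wedge2 pairing_LD (brL X (\<gamma> i)) (\<delta> i) d1 d2
         + wedge2 pairing_LD (\<gamma> i) (brL X (\<delta> i)) d1 d2)" for d1 d2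
      have g1: "gb_2_1 CL CD brL pairing_LD (dst X) Y w1"
        unfolding gb_2_1_def w1_def using ab rX by blast
      have g2: "gb_1_2 CL CD brL pairing_LD X (dst Y) w2"
        unfolding gb_1_2_def w2_def using cd rY by blast
      have e: "\<forall>d1\<in>CD. \<forall>d2\<in>CD. dst (brL X Y) d1 d2 = w1 d1 d2 + w2 d1 d2"
      proof (intro ballI)
        fix d1 d2 :: "'q \<times> ('p \<Rightarrow> 'a)" assume d1: "d1 \<in> CD" and d2: "d2 \<in> CD"
        have "Eq X Y d1 d2" using B X Y d1 d2 by blast
        then show "dst (brL X Y) d1 d2 = w1 d1 d2 + w2 d1 d2"
          unfolding Eq_def LieD_def using gb21[OF g1 Y d1 d2] gb12[OF g2 X d1 d2] by simp
      qed
      show "\<exists>w1 w2. gb_2_1 CL CD brL pairing_LD (dst X) Y w1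
      \<and> gb_1_2 CL CD brL pairing_LD X (dst Y) w2
      \<and> (\<forall>d1\<in>CD. \<forall>d2\<in>CD. dst (brL X Y) d1 d2 = w1 d1 d2 + w2 d1 d2)"
        using g1 g2 e by blast
    qed
  qed
  then show ?thesis
    unfolding LR_bialgebra_def using LRL LRD unfolding dd CL_def CD_def brL_def by simp
qed

lemma main:
  assumes fg1: "fg_projective sm1" and fg2: "fg_projective sm2"
  shows "twilled \<iota> sm1 br1 anc1 sm2 br2 anc2 dot12 dot21 \<longleftrightarrow>
         LR_bialgebra \<iota>
           (UNIV \<times> dual_mod sm2) (sdp_sm sm1) (sdp_br br1 anc1 dot12) (sdp_anc anc1)
           (UNIV \<times> dual_mod sm1) (sdp_sm sm2) (sdp_br br2 anc2 dot21) (sdp_anc anc2)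
           pairing_LD"
  unfolding bialg_iff_Eq[OF fg1 fg2] Eq_all_iff_C[OF fg1 fg2] twilled_def
  using at tw_C C_tw by blast

end

theorem corollary4p2:
  fixes \<iota> :: "'r::comm_ring_1 \<Rightarrow> 'a::comm_ring_1"
    and sm1 :: "'a \<Rightarrow> 'p::ab_group_add \<Rightarrow> 'p" and br1 :: "'p \<Rightarrow> 'p \<Rightarrow> 'p" and anc1 :: "'p \<Rightarrow> 'a \<Rightarrow> 'a"
    and sm2 :: "'a \<Rightarrow> 'q::ab_group_add \<Rightarrow> 'q" and br2 :: "'q \<Rightarrow> 'q \<Rightarrow> 'q" and anc2 :: "'q \<Rightarrow> 'a \<Rightarrow> 'a"
    and dot12 :: "'p \<Rightarrow> 'q \<Rightarrow> 'q" and dot21 :: "'q \<Rightarrow> 'p \<Rightarrow> 'p"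
  assumes "R_algebra_map \<iota>"
    and "almost_twilled \<iota> sm1 br1 anc1 sm2 br2 anc2 dot12 dot21"
    and "fg_projective sm1" and "fg_projective sm2"
  shows "twilled \<iota> sm1 br1 anc1 sm2 br2 anc2 dot12 dot21 \<longleftrightarrow>
         LR_bialgebra \<iota>
           (UNIV \<times> dual_mod sm2) (sdp_sm sm1) (sdp_br br1 anc1 dot12) (sdp_anc anc1)
           (UNIV \<times> dual_mod sm1) (sdp_sm sm2) (sdp_br br2 anc2 dot21) (sdp_anc anc2)
           pairing_LD"
proof -
  interpret AT \<iota> sm1 br1 anc1 sm2 br2 anc2 dot12 dot21 by unfold_locales (rule assms(2))
  show ?thesis by (rule main[OF assms(3,4)])
qed


end
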